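(* Let $d\ge1$, let $\mu_0:\mathbb{Z}^d\to[0,\infty)$ have finite support, and let $x_1,x_2,\ldots\in\mathbb{Z}^d$ be a sequence in which every $x\in\mathbb{Z}^d$ appears infinitely often. Define $\mu_k=T_{x_k}\cdots T_{x_1}\mu_0$ and $u_k(y)=\sum_{j\le k:\,x_j=y}\max(\mu_{j-1}(y)-1,0)$ (the total mass emitted from $y$ during the first $k$ topplings). Then as $k\to\infty$, $u_k\uparrow u$ pointwise for some finite function $u$, and $\mu_k\to\mu$ pointwise, where \[ \mu=\mu_0+\Delta u\le 1. \]
   Context: For a mass distribution $\mu:\mathbb{Z}^d\to[0,\infty)$ and $x\in\mathbb{Z}^d$, the toppling operator is $T_x\mu=\mu+\alpha\,\Delta\delta_x$ with $\alpha=\max(\mu(x)-1,0)$: if $\mu(x)>1$ the excess $\mu(x)-1$ is split equally among the $2d$ lattice neighbors of $x$ and $x$ keeps mass $1$. $\Delta f(x)=\frac1{2d}\sum_{y\sim x}f(y)-f(x)$ is the discrete Laplacian and $\delta_x$ the indicator of $\{x\}$. *)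

theory Defs
  imports "HOL-Analysis.Analysis"
begin

text \<open>The lattice Z^d is rendered as int ^ 'n, with d = CARD('n) (arbitrary, d \<ge> 1 automatically).\<close>

definition lattice_nbrs :: "int ^ 'n \<Rightarrow> (int ^ 'n) set" where
  "lattice_nbrs x = {y. (\<Sum>i\<in>UNIV. \<bar>y $ i - x $ i\<bar>) = 1}"

definition dlap :: "(int ^ 'n \<Rightarrow> real) \<Rightarrow> int ^ 'n \<Rightarrow> real" where
  "dlap f x = (1 / (2 * real CARD('n))) * (\<Sum>y\<in>lattice_nbrs x. f y) - f x"

definition topple :: "int ^ 'n \<Rightarrow> (int ^ 'n \<Rightarrow> real) \<Rightarrow> (int ^ 'n \<Rightarrow> real)" where
  "topple x \<mu> = (\<lambda>z. \<mu> z + max (\<mu> x - 1) 0 * dlap (\<lambda>w. if w = x then 1 else 0) z)"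

text \<open>mu_k = T_{x_k} ... T_{x_1} mu_0; the sequence is indexed from 1 (xs 0 is unused).\<close>
primrec topple_seq :: "(int ^ 'n \<Rightarrow> real) \<Rightarrow> (nat \<Rightarrow> int ^ 'n) \<Rightarrow> nat \<Rightarrow> (int ^ 'n \<Rightarrow> real)" where
  "topple_seq \<mu>0 xs 0 = \<mu>0"
| "topple_seq \<mu>0 xs (Suc k) = topple (xs (Suc k)) (topple_seq \<mu>0 xs k)"

definition odometer :: "(int ^ 'n \<Rightarrow> real) \<Rightarrow> (nat \<Rightarrow> int ^ 'n) \<Rightarrow> nat \<Rightarrow> int ^ 'n \<Rightarrow> real" where
  "odometer \<mu>0 xs k y =
     (\<Sum>j\<in>{j. 1 \<le> j \<and> j \<le> k \<and> xs j = y}. max (topple_seq \<mu>0 xs (j - 1) y - 1) 0)"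

end

theory Submission
  imports Defs
begin

lemma dlap_add_scale: "dlap (\<lambda>z. f z + c * g z) x = dlap f x + c * dlap g x"
  unfolding dlap_def by (simp add: sum.distrib sum_distrib_left algebra_simps)

lemma odometer_0: "odometer \<mu>0 xs 0 y = 0"
  unfolding odometer_def by simp

lemma odometer_Suc: "odometer \<mu>0 xs (Suc k) y = odometer \<mu>0 xs k y +
   (if xs (Suc k) = y then max (topple_seq \<mu>0 xs k y - 1) 0 else 0)"
proof (cases "xs (Suc k) = y")
  case True
  have "{j. 1 \<le> j \<and> j \<le> Suc k \<and> xs j = y} = insert (Suc k) {j. 1 \<le> j \<and> j \<le> k \<and> xs j = y}"
    using True by auto
  moreover have "finite {j. 1 \<le> j \<and> j \<le> k \<and> xs j = y}" by (rule finite_subset[of _ "{..k}"]) auto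
  ultimately show ?thesis using True unfolding odometer_def by simp
next
  case False
  have "{j. 1 \<le> j \<and> j \<le> Suc k \<and> xs j = y} = {j. 1 \<le> j \<and> j \<le> k \<and> xs j = y}"
    using False le_Suc_eq by auto
  then show ?thesis using False unfolding odometer_def by simp
qed

lemma odometer_nonneg: "odometer \<mu>0 xs k y \<ge> 0"
  unfolding odometer_def by (rule sum_nonneg) simp

lemma odometer_mono: "mono (\<lambda>k. odometer \<mu>0 xs k y)"
  unfolding mono_iff_le_Suc by (simp add: odometer_Suc)

lemma topple_seq_eq: "topple_seq \<mu>0 xs k = (\<lambda>y. \<mu>0 y + dlap (odometer \<mu>0 xs k) y)"
proof (induction k)
  case 0
  show ?case by (simp add: odometer_0 dlap_def)
next
  case (Suc k)
  define x where "x = xs (Suc k)"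
  define a where "a = max (topple_seq \<mu>0 xs k x - 1) 0"
  have u: "odometer \<mu>0 xs (Suc k) = (\<lambda>y. odometer \<mu>0 xs k y + a * (if y = x then 1 else 0))"
    by (rule ext) (auto simp: odometer_Suc a_def x_def)
  show ?case
    unfolding u dlap_add_scale
    by (rule ext) (simp add: topple_def Suc.IH a_def x_def algebra_simps)
qed

lemma least_action:
  assumes w0: "\<forall>y. w y \<ge> 0" and ws: "\<forall>y. \<mu>0 y + dlap w y \<le> 1"
  shows "odometer \<mu>0 xs k y \<le> w y"
proof (induction k arbitrary: y)
  case 0
  then show ?case using w0 by (simp add: odometer_0)
next
  case (Suc k)
  show ?case
  proof (cases "xs (Suc k) = y \<and> topple_seq \<mu>0 xs k y > 1")
    case False
    then show ?thesis using Suc.IH[of y] by (auto simp: odometer_Suc)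
  next
    case True
    have le: "(\<Sum>z\<in>lattice_nbrs y. odometer \<mu>0 xs k z) \<le> (\<Sum>z\<in>lattice_nbrs y. w z)"
      by (rule sum_mono) (rule Suc.IH)
    have c: "1 / (2 * real CARD('a)) \<ge> 0" by simp
    have "odometer \<mu>0 xs (Suc k) y = odometer \<mu>0 xs k y + topple_seq \<mu>0 xs k y - 1"
      using True by (simp add: odometer_Suc)
    also have "\<dots> = \<mu>0 y + 1 / (2 * real CARD('a)) * (\<Sum>z\<in>lattice_nbrs y. odometer \<mu>0 xs k z) - 1"
      by (simp add: topple_seq_eq dlap_def)
    also have "\<dots> \<le> \<mu>0 y + 1 / (2 * real CARD('a)) * (\<Sum>z\<in>lattice_nbrs y. w z) - 1"
      using mult_left_mono[OF le c] by simp
    also have "\<dots> = \<mu>0 y + dlap w y + w y - 1" by (simp add: dlap_def)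
    also have "\<dots> \<le> w y" using ws by (simp add: algebra_simps)
    finally show ?thesis .
  qed
qed

lemma not_self_nbr: "x \<notin> lattice_nbrs x"
  unfolding lattice_nbrs_def by simp

lemma topple_at:
  assumes "xs k = x" "k \<ge> 1"
  shows "topple_seq \<mu>0 xs k x \<le> 1"
proof -
  obtain m where k: "k = Suc m" using assms(2) by (cases k) auto
  have s: "(\<Sum>y\<in>lattice_nbrs x. (if y = x then 1 else 0::real)) = 0"
    by (rule sum.neutral) (use not_self_nbr in auto)
  have "dlap (\<lambda>w. if w = x then 1 else 0) x = -1" unfolding dlap_def s by simp
  then show ?thesis using assms k by (simp add: topple_def)
qed


lemma nbrs_eq: "lattice_nbrs (x::int^'n) = range (\<lambda>i. x + axis i 1) \<union> range (\<lambda>i. x - axis i 1)"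
proof
  show "range (\<lambda>i. x + axis i 1) \<union> range (\<lambda>i. x - axis i 1) \<subseteq> lattice_nbrs x"
  proof -
    have "\<And>i. (\<Sum>j\<in>UNIV. \<bar>(x + axis i 1) $ j - x $ j\<bar>) = (1::int)"
      "\<And>i. (\<Sum>j\<in>UNIV. \<bar>(x - axis i 1) $ j - x $ j\<bar>) = (1::int)"
    proof -
      fix i
      have e1: "\<And>j. \<bar>(x + axis i 1) $ j - x $ j\<bar> = (if j = i then 1 else (0::int))"
        by (simp add: axis_def)
      have e2: "\<And>j. \<bar>(x - axis i 1) $ j - x $ j\<bar> = (if j = i then 1 else (0::int))"
        by (simp add: axis_def)
      show "(\<Sum>j\<in>UNIV. \<bar>(x + axis i 1) $ j - x $ j\<bar>) = (1::int)" unfolding e1 by simp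
      show "(\<Sum>j\<in>UNIV. \<bar>(x - axis i 1) $ j - x $ j\<bar>) = (1::int)" unfolding e2 by simp
    qed
    then show ?thesis by (auto simp: lattice_nbrs_def)
  qed
next
  show "lattice_nbrs x \<subseteq> range (\<lambda>i. x + axis i 1) \<union> range (\<lambda>i. x - axis i 1)"
  proof
    fix y assume "y \<in> lattice_nbrs x"
    then have s: "(\<Sum>j\<in>UNIV. \<bar>y $ j - x $ j\<bar>) = 1" by (simp add: lattice_nbrs_def)
    have "\<exists>i. y $ i \<noteq> x $ i"
    proof (rule ccontr)
      assume "\<not> ?thesis" then show False using s by simp
    qed
    then obtain i where i: "y $ i \<noteq> x $ i" by blast
    have "\<bar>y $ i - x $ i\<bar> \<le> 1" using s member_le_sum[of i UNIV "\<lambda>j. \<bar>y $ j - x $ j\<bar>"] by simp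
    with i have ai: "\<bar>y $ i - x $ i\<bar> = 1" by linarith
    have "(\<Sum>j\<in>UNIV. \<bar>y $ j - x $ j\<bar>) = \<bar>y $ i - x $ i\<bar> + (\<Sum>j\<in>UNIV - {i}. \<bar>y $ j - x $ j\<bar>)"
      by (simp add: sum.remove)
    then have "(\<Sum>j\<in>UNIV - {i}. \<bar>y $ j - x $ j\<bar>) = 0" using s ai by simp
    then have oth: "\<forall>j\<in>UNIV - {i}. \<bar>y $ j - x $ j\<bar> = 0"
      by (subst (asm) sum_nonneg_eq_0_iff) auto
    show "y \<in> range (\<lambda>i. x + axis i 1) \<union> range (\<lambda>i. x - axis i 1)"
    proof (cases "y $ i - x $ i = 1")
      case True
      have "y = x + axis i 1" unfolding vec_eq_iff using oth True by (auto simp: axis_def)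
      then show ?thesis by blast
    next
      case False
      then have "y $ i - x $ i = -1" using ai by linarith
      then have "y = x - axis i 1" unfolding vec_eq_iff using oth by (auto simp: axis_def)
      then show ?thesis by blast
    qed
  qed
qed

lemma sum_nbrs: "(\<Sum>y\<in>lattice_nbrs (x::int^'n). f y) = (\<Sum>i\<in>UNIV. f (x + axis i 1)) + (\<Sum>i\<in>UNIV. f (x - axis i 1))"
proof -
  have inj1: "inj (\<lambda>i. x + axis i (1::int))" by (rule injI) (simp add: axis_eq_axis)
  have inj2: "inj (\<lambda>i. x - axis i (1::int))" by (rule injI) (simp add: axis_eq_axis)
  have disj: "range (\<lambda>i. x + axis i 1) \<inter> range (\<lambda>i. x - axis i 1) = {}"
  proof (rule ccontr)
    assume "\<not> ?thesis"
    then obtain i j where "x + axis i 1 = x - axis j (1::int)" by auto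
    then have "(x + axis i 1) $ i = (x - axis j 1) $ i" by simp
    then show False by (auto simp: axis_def split: if_splits)
  qed
  show ?thesis unfolding nbrs_eq
    by (simp add: sum.union_disjoint disj sum.reindex inj1 inj2)
qed


definition H :: "int \<Rightarrow> int \<Rightarrow> real" where
  "H r t = (if \<bar>t\<bar> \<le> r then (real_of_int t)^2 else 2 * r * \<bar>t\<bar> - (real_of_int r)^2)"

lemma DH_nonneg:
  assumes "r \<ge> 1"
  shows "H r (t+1) + H r (t-1) - 2 * H r t \<ge> 0"
proof -
  consider "t \<ge> r + 1" | "t = r" | "\<bar>t\<bar> < r" | "t = -r" | "t \<le> -r - 1" by linarith
  then show ?thesis
  proof cases
    case 1
    then have "\<not> \<bar>t\<bar> \<le> r" "\<not> \<bar>t+1\<bar> \<le> r" "\<bar>t\<bar> = t" "\<bar>t+1\<bar> = t+1" "\<bar>t-1\<bar> = t - 1" using assms by auto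
    then show ?thesis using 1 by (auto simp: H_def power2_eq_square algebra_simps)
  next
    case 2
    then show ?thesis using assms by (auto simp: H_def power2_eq_square algebra_simps)
  next
    case 3
    then have "\<bar>t\<bar> \<le> r" "\<bar>t+1\<bar> \<le> r" "\<bar>t-1\<bar> \<le> r" by auto
    then show ?thesis by (simp add: H_def power2_eq_square algebra_simps)
  next
    case 4
    then show ?thesis using assms by (auto simp: H_def power2_eq_square algebra_simps)
  next
    case 5
    then have "\<not> \<bar>t\<bar> \<le> r" "\<not> \<bar>t-1\<bar> \<le> r" "\<bar>t\<bar> = -t" "\<bar>t-1\<bar> = 1-t" "\<bar>t+1\<bar> = -t - 1" using assms by auto
    moreover have "0 \<le> (real_of_int r + real_of_int t + 1)^2" by simp
    ultimately show ?thesis using 5 by (auto simp: H_def power2_eq_square algebra_simps)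
  qed
qed

lemma DH_in:
  assumes "\<bar>t\<bar> < r"
  shows "H r (t+1) + H r (t-1) - 2 * H r t = 2"
proof -
  have "\<bar>t\<bar> \<le> r" "\<bar>t+1\<bar> \<le> r" "\<bar>t-1\<bar> \<le> r" using assms by auto
  then show ?thesis by (simp add: H_def power2_eq_square algebra_simps)
qed

definition phi :: "real \<Rightarrow> int \<Rightarrow> int \<Rightarrow> real" where
  "phi E r t = (real_of_int t)^2 - E * H r t + E^2 * (real_of_int r)^2"

lemma phi_nonneg:
  assumes "E \<ge> 1" "r \<ge> 0"
  shows "phi E r t \<ge> 0"
proof (cases "\<bar>t\<bar> \<le> r")
  case True
  have "(real_of_int t)^2 \<le> (real_of_int r)^2"
    using True by (metis abs_le_square_iff of_int_abs of_int_le_iff assms(2) abs_of_nonneg)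
  then have "(1 - E) * (real_of_int t)^2 \<ge> (1 - E) * (real_of_int r)^2"
    using assms by (intro mult_left_mono_neg) auto
  moreover have "E^2 - E + 1 \<ge> 0" using assms by (simp add: power2_eq_square)
  then have "(real_of_int r)^2 * (E^2 - E + 1) \<ge> 0" by simp
  ultimately show ?thesis using True by (simp add: phi_def H_def algebra_simps)
next
  case False
  have "phi E r t = (\<bar>real_of_int t\<bar> - E * r)^2 + E * (real_of_int r)^2"
    using False by (simp add: phi_def H_def power2_eq_square algebra_simps)
  then show ?thesis using assms by simp
qed

lemma Dphi_le:
  assumes "r \<ge> 1" "E \<ge> 1"
  shows "phi E r (t+1) + phi E r (t-1) - 2 * phi E r t \<le> 2"
proof -
  have "phi E r (t+1) + phi E r (t-1) - 2 * phi E r t = 2 - E * (H r (t+1) + H r (t-1) - 2 * H r t)"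
    by (simp add: phi_def power2_eq_square algebra_simps)
  moreover have "E * (H r (t+1) + H r (t-1) - 2 * H r t) \<ge> 0"
    using DH_nonneg[OF assms(1)] assms(2) by simp
  ultimately show ?thesis by linarith
qed

lemma Dphi_in:
  assumes "\<bar>t\<bar> < r"
  shows "phi E r (t+1) + phi E r (t-1) - 2 * phi E r t = 2 - 2 * E"
proof -
  have "phi E r (t+1) + phi E r (t-1) - 2 * phi E r t = 2 - E * (H r (t+1) + H r (t-1) - 2 * H r t)"
    by (simp add: phi_def power2_eq_square algebra_simps)
  then show ?thesis using DH_in[OF assms] by simp
qed


lemma sum_shift:
  fixes g :: "int \<Rightarrow> real" and x :: "int^'n"
  shows "(\<Sum>j\<in>UNIV. g ((x + axis i c) $ j)) = (\<Sum>j\<in>UNIV. g (x $ j)) + g (x $ i + c) - g (x $ i)"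
proof -
  have "(\<Sum>j\<in>UNIV. g ((x + axis i c) $ j)) - (\<Sum>j\<in>UNIV. g (x $ j))
      = (\<Sum>j\<in>UNIV. g ((x + axis i c) $ j) - g (x $ j))" by (simp add: sum_subtractf)
  also have "\<dots> = (\<Sum>j\<in>UNIV. if j = i then g (x $ i + c) - g (x $ i) else 0)"
    by (rule sum.cong) (auto simp: axis_def)
  also have "\<dots> = g (x $ i + c) - g (x $ i)" by simp
  finally show ?thesis by simp
qed

lemma dlap_sep:
  fixes g :: "int \<Rightarrow> real"
  shows "dlap (\<lambda>x::int^'n. \<Sum>j\<in>UNIV. g (x $ j)) x =
    1 / (2 * real CARD('n)) * (\<Sum>i\<in>UNIV. g (x $ i + 1) + g (x $ i - 1) - 2 * g (x $ i))"
proof -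
  let ?w = "\<lambda>x::int^'n. \<Sum>j\<in>UNIV. g (x $ j)"
  have m: "x - axis i 1 = x + axis i (-1)" for i by (simp add: axis_def vec_eq_iff)
  have "(\<Sum>y\<in>lattice_nbrs x. ?w y) = (\<Sum>i\<in>UNIV. ?w x + g (x $ i + 1) - g (x $ i)) + (\<Sum>i\<in>UNIV. ?w x + g (x $ i - 1) - g (x $ i))"
    unfolding sum_nbrs m sum_shift by simp
  also have "\<dots> = 2 * real CARD('n) * ?w x + (\<Sum>i\<in>UNIV. g (x $ i + 1) + g (x $ i - 1) - 2 * g (x $ i))"
    by (simp add: sum.distrib sum_subtractf algebra_simps sum_distrib_left[symmetric])
  finally have "(\<Sum>y\<in>lattice_nbrs x. ?w y) = \<dots>" .
  then show ?thesis unfolding dlap_def by (simp add: algebra_simps)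
qed

lemma fin_bound: "finite A \<Longrightarrow> \<exists>B. \<forall>x\<in>A. f x \<le> (B::'b::linorder)"
proof (induction A rule: finite_induct)
  case empty then show ?case by blast
next
  case (insert a A)
  then obtain B where "\<forall>x\<in>A. f x \<le> B" by blast
  then show ?case by (intro exI[of _ "max B (f a)"]) (auto simp: le_max_iff_disj)
qed

lemma exists_w:
  fixes \<mu>0 :: "int ^ 'n \<Rightarrow> real"
  assumes "finite {x. \<mu>0 x \<noteq> 0}"
  shows "\<exists>w. (\<forall>y. w y \<ge> 0) \<and> (\<forall>y. \<mu>0 y + dlap w y \<le> 1)"
proof -
  let ?S = "{x. \<mu>0 x \<noteq> 0}"
  obtain B where B: "\<forall>p\<in>?S \<times> (UNIV::'n set). (\<lambda>(x,i). \<bar>x $ i\<bar>) p \<le> (B::int)"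
    using fin_bound[of "?S \<times> UNIV" "\<lambda>(x,i). \<bar>x $ i\<bar>"] assms by auto
  obtain M where M: "\<forall>x\<in>?S. \<mu>0 x \<le> (M::real)" using fin_bound[OF assms] by blast
  define r where "r = max B 0 + 1"
  define E where "E = max M 1"
  have r1: "r \<ge> 1" and E1: "E \<ge> 1" by (auto simp: r_def E_def)
  have rS: "\<bar>x $ i\<bar> < r" if "x \<in> ?S" for x i proof -
    have "\<bar>x $ i\<bar> \<le> B" using B that by fastforce
    then show ?thesis by (simp add: r_def)
  qed
  define w where "w = (\<lambda>x::int^'n. \<Sum>j\<in>UNIV. phi E r (x $ j))"
  have d: "real CARD('n) > 0" by simp
  show ?thesis
  proof (intro exI[of _ w] conjI allI)
    fix y show "w y \<ge> 0" unfolding w_def using phi_nonneg[OF E1] r1 by (simp add: sum_nonneg)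
  next
    fix y
    have dw: "dlap w y = 1 / (2 * real CARD('n)) * (\<Sum>i\<in>UNIV. phi E r (y $ i + 1) + phi E r (y $ i - 1) - 2 * phi E r (y $ i))"
      unfolding w_def by (rule dlap_sep)
    show "\<mu>0 y + dlap w y \<le> 1"
    proof (cases "y \<in> ?S")
      case True
      have "(\<Sum>i\<in>UNIV. phi E r (y $ i + 1) + phi E r (y $ i - 1) - 2 * phi E r (y $ i)) = (\<Sum>i\<in>(UNIV::'n set). 2 - 2 * E)"
        by (rule sum.cong) (auto intro: Dphi_in rS[OF True])
      then have "dlap w y = 1 - E" unfolding dw using d by (simp add: field_simps)
      moreover have "\<mu>0 y \<le> E" using M True by (auto simp: E_def)
      ultimately show ?thesis by simp
    next
      case False
      have "(\<Sum>i\<in>UNIV. phi E r (y $ i + 1) + phi E r (y $ i - 1) - 2 * phi E r (y $ i)) \<le> (\<Sum>i\<in>(UNIV::'n set). 2)"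
        by (rule sum_mono) (rule Dphi_le[OF r1 E1])
      then have "dlap w y \<le> 1" unfolding dw using d by (simp add: field_simps)
      then show ?thesis using False by simp
    qed
  qed
qed

theorem lemma3p1:
  fixes \<mu>0 :: "int ^ 'n \<Rightarrow> real" and xs :: "nat \<Rightarrow> int ^ 'n"
  assumes "\<forall>x. \<mu>0 x \<ge> 0"
    and "finite {x. \<mu>0 x \<noteq> 0}"
    and "\<forall>x. infinite {k. k \<ge> 1 \<and> xs k = x}"
  shows "\<exists>u :: int ^ 'n \<Rightarrow> real.
           (\<forall>y. mono (\<lambda>k. odometer \<mu>0 xs k y) \<and> (\<lambda>k. odometer \<mu>0 xs k y) \<longlonglongrightarrow> u y)
         \<and> (\<forall>y. (\<lambda>k. topple_seq \<mu>0 xs k y) \<longlonglongrightarrow> \<mu>0 y + dlap u y)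
         \<and> (\<forall>y. \<mu>0 y + dlap u y \<le> 1)"
proof -
  obtain w where w0: "\<forall>y. w y \<ge> 0" and ws: "\<forall>y. \<mu>0 y + dlap w y \<le> 1"
    using exists_w[OF assms(2)] by blast
  define u where "u y = (SUP k. odometer \<mu>0 xs k y)" for y
  have conv: "(\<lambda>k. odometer \<mu>0 xs k y) \<longlonglongrightarrow> u y" for y
    unfolding u_def
  proof (rule LIMSEQ_incseq_SUP)
    show "bdd_above (range (\<lambda>k. odometer \<mu>0 xs k y))"
      using least_action[OF w0 ws, of xs _ y] by (intro bdd_aboveI[of _ "w y"]) auto
    show "incseq (\<lambda>k. odometer \<mu>0 xs k y)" using odometer_mono[of \<mu>0 xs y] by (simp add: mono_def incseq_def)
  qed
  have lim: "(\<lambda>k. topple_seq \<mu>0 xs k y) \<longlonglongrightarrow> \<mu>0 y + dlap u y" for y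
    unfolding topple_seq_eq dlap_def
    by (intro tendsto_intros conv)
  have le1: "\<mu>0 y + dlap u y \<le> 1" for y
  proof (rule ccontr)
    assume "\<not> ?thesis"
    then have "\<forall>\<^sub>F k in sequentially. topple_seq \<mu>0 xs k y > 1"
      using order_tendstoD(1)[OF lim[of y]] by simp
    then obtain N where N: "\<And>k. k \<ge> N \<Longrightarrow> topple_seq \<mu>0 xs k y > 1"
      unfolding eventually_sequentially by blast
    obtain k where k: "k \<in> {k. k \<ge> 1 \<and> xs k = y}" "k \<ge> N"
      using assms(3) infinite_nat_iff_unbounded_le by blast
    then show False using N[OF k(2)] topple_at[of xs k y \<mu>0] by auto
  qed
  show ?thesis using odometer_mono conv lim le1 by blast
qed

end
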